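(* Let $N$ be a positive integer and $t>-\log N$. For integers $n\ge N$ let $$\theta_n(t,N)=\int_N^n\frac{dx}{t+\log x}-\sum_{k=N}^{n-1}\frac{1}{H_k-\gamma+t}.$$ (1) The sequence $(\theta_n(t,N))_{n>N}$ is positive, strictly increasing and bounded above; hence $\theta(t,N)=\lim_{n\to\infty}\theta_n(t,N)>0$ exists. (2) For all integers $n\ge N$ one has $\theta(t,N)-\theta_n(t,N)=\theta(t,n)$ and $$\int_{n+1}^\infty\frac{dx}{24x^2(t+\log x)^2}+\frac{1}{24(n+1)(t+\log(n+1))^2}\le\theta(t,n)$$ $$\le\int_n^\infty\frac{dx}{24x^2(t+\log x)^2}+\frac{1}{24(n+\frac12)(t+\log(n+\frac12))^2}+\frac{1}{24n^2(t+\log n)^2}+\frac{1}{12n^2(t+\log n)^3}.$$ (3) $\theta(t,N)=\theta_n(t,N)+\frac{1+o(1)}{12n(\log n)^2}$ as $n\to\infty$, and $\theta(t,N)=O\!\left(\frac{1}{Nt^2}\right)$ as $t\to\infty$, where the implied constant does not depend on $N$.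
   Context: $\gamma$ is the Euler–Mascheroni constant and $H_k=\sum_{j=1}^k1/j$ is the $k$-th harmonic number. *)

theory Defs
  imports "HOL-Analysis.Analysis" "HOL-Library.Landau_Symbols"
begin

definition theta_n :: "real \<Rightarrow> nat \<Rightarrow> nat \<Rightarrow> real" where
  "theta_n t N n =
     integral {real N..real n} (\<lambda>x. 1 / (t + ln x))
     - (\<Sum>k=N..<n. 1 / (harm k - euler_mascheroni + t))"

definition theta :: "real \<Rightarrow> nat \<Rightarrow> real" where
  "theta t N = lim (\<lambda>n. theta_n t N n)"

end

theory Submission
  imports Defs "HOL-Real_Asymp.Real_Asymp"
begin


definition ff :: "real \<Rightarrow> real \<Rightarrow> real" where "ff t x = 1/(t + ln x)"
definition f1 :: "real \<Rightarrow> real \<Rightarrow> real" where "f1 t x = - 1/(x*(t+ln x)^2)"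
definition f2 :: "real \<Rightarrow> real \<Rightarrow> real" where
  "f2 t x = 1/(x^2*(t+ln x)^2) + 2/(x^2*(t+ln x)^3)"
definition gg :: "real \<Rightarrow> real \<Rightarrow> real" where "gg t x = 1/(24*x^2*(t+ln x)^2)"
definition g1 :: "real \<Rightarrow> real \<Rightarrow> real" where
  "g1 t x = - (1/(12*x^3*(t+ln x)^2) + 1/(12*x^3*(t+ln x)^3))"
definition ph :: "real \<Rightarrow> real \<Rightarrow> real" where "ph t x = 1/(24*x*(t+ln x)^2)"
definition hh :: "real \<Rightarrow> real \<Rightarrow> real" where "hh t x = 1/(12*x^2*(t+ln x)^3)"

lemma D_ff: assumes "x > 0" "t + ln x > 0"
  shows "(ff t has_real_derivative f1 t x) (at x)"
proof -
  obtain l where l: "ln x = l - t" "l > 0" "l \<noteq> 0" using assms by (metis add_diff_cancel_left' less_irrefl)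
  show ?thesis unfolding ff_def f1_def using assms
    by (auto intro!: derivative_eq_intros simp: l power2_eq_square power3_eq_cube field_simps)
qed

lemma D_f1: assumes "x > 0" "t + ln x > 0"
  shows "(f1 t has_real_derivative f2 t x) (at x)"
proof -
  obtain l where l: "ln x = l - t" "l > 0" "l \<noteq> 0" using assms by (metis add_diff_cancel_left' less_irrefl)
  show ?thesis unfolding f2_def f1_def using assms
    by (auto intro!: derivative_eq_intros simp: l power2_eq_square power3_eq_cube field_simps)
qed

lemma D_gg: assumes "x > 0" "t + ln x > 0"
  shows "(gg t has_real_derivative g1 t x) (at x)"
proof -
  obtain l where l: "ln x = l - t" "l > 0" "l \<noteq> 0" using assms by (metis add_diff_cancel_left' less_irrefl)
  show ?thesis unfolding gg_def g1_def using assms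
    by (auto intro!: derivative_eq_intros simp: l power2_eq_square power3_eq_cube field_simps)
qed

lemma D_ph: assumes "x > 0" "t + ln x > 0"
  shows "(ph t has_real_derivative -(gg t x + hh t x)) (at x)"
proof -
  obtain l where l: "ln x = l - t" "l > 0" "l \<noteq> 0" using assms by (metis add_diff_cancel_left' less_irrefl)
  show ?thesis unfolding gg_def ph_def hh_def using assms
    by (auto intro!: derivative_eq_intros simp: l power2_eq_square power3_eq_cube field_simps)
qed

lemma f2_eq: "f2 t x = 24 * (gg t x + hh t x)"
  unfolding f2_def gg_def hh_def by (simp add: field_simps)

lemma ph_eq: "ph t x = - f1 t x / 24"
  unfolding f1_def ph_def by simp

lemma inv_mono_aux:
  fixes a b c d :: real
  assumes "0 < a" "a \<le> b" "0 < c" "c \<le> d"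
  shows "1/(b^n*d^m) \<le> 1/(a^n*c^m)"
proof -
  have "a^n*c^m \<le> b^n*d^m"
    using assms by (intro mult_mono power_mono) auto
  moreover have "0 < a^n*c^m" using assms by simp
  ultimately show ?thesis by (intro divide_left_mono) auto
qed



lemma mono_facts:
  assumes "0 < x" "x \<le> y" "t + ln x > 0"
  shows "f2 t y \<le> f2 t x" "gg t y \<le> gg t x" "hh t y \<le> hh t x" "ph t y \<le> ph t x"
    "ff t y \<le> ff t x" "g1 t x \<le> g1 t y"
proof -
  have L: "t + ln x \<le> t + ln y" using assms by (simp add: ln_mono)
  note I = inv_mono_aux[OF assms(1,2) assms(3) L]
  have a: "1/(y^2*(t+ln y)^2) \<le> 1/(x^2*(t+ln x)^2)" using I[of 2 2] .
  have b: "1/(y^2*(t+ln y)^3) \<le> 1/(x^2*(t+ln x)^3)" using I[of 2 3] .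
  have c: "1/(y^3*(t+ln y)^2) \<le> 1/(x^3*(t+ln x)^2)" using I[of 3 2] .
  have d: "1/(y^3*(t+ln y)^3) \<le> 1/(x^3*(t+ln x)^3)" using I[of 3 3] .
  have e: "1/(y^1*(t+ln y)^2) \<le> 1/(x^1*(t+ln x)^2)" using I[of 1 2] .
  have f: "1/(y^0*(t+ln y)^1) \<le> 1/(x^0*(t+ln x)^1)" using I[of 0 1] .
  show "f2 t y \<le> f2 t x" unfolding f2_def using a b by (simp add: divide_right_mono)
  show "gg t y \<le> gg t x" unfolding gg_def using a
    by (metis (no_types, opaque_lifting) divide_divide_eq_left' divide_right_mono mult.assoc zero_le_numeral)
  show "hh t y \<le> hh t x" unfolding hh_def using b
    by (metis (no_types, opaque_lifting) divide_divide_eq_left' divide_right_mono mult.assoc zero_le_numeral)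
  show "ph t y \<le> ph t x" unfolding ph_def using e
    by (metis (no_types, opaque_lifting) divide_divide_eq_left' divide_right_mono mult.assoc power_one_right zero_le_numeral)
  show "ff t y \<le> ff t x" unfolding ff_def using f by simp
  show "g1 t x \<le> g1 t y" unfolding g1_def using c d
    by (metis (no_types, opaque_lifting) add_mono divide_divide_eq_left' divide_right_mono mult.assoc neg_le_iff_le zero_le_numeral)
qed

lemma pos_facts:
  assumes "0 < x" "t + ln x > 0"
  shows "f2 t x > 0" "gg t x > 0" "hh t x > 0" "ph t x > 0" "ff t x > 0"
  using assms unfolding f2_def gg_def hh_def ph_def ff_def by (auto intro!: add_pos_pos)



lemma cmp_deriv:
  fixes h p h' p' :: "real \<Rightarrow> real"
  assumes "0 \<le> a"
    and hd: "\<And>u. 0 \<le> u \<Longrightarrow> u \<le> a \<Longrightarrow> (h has_real_derivative h' u) (at u)"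
    and pd: "\<And>u. 0 \<le> u \<Longrightarrow> u \<le> a \<Longrightarrow> (p has_real_derivative p' u) (at u)"
    and le: "\<And>u. 0 \<le> u \<Longrightarrow> u \<le> a \<Longrightarrow> h' u \<le> p' u"
    and h0: "h 0 \<le> p 0"
  shows "h a \<le> p a"
proof -
  have "(\<lambda>u. p u - h u) 0 \<le> (\<lambda>u. p u - h u) a"
  proof (rule DERIV_nonneg_imp_nondecreasing[OF assms(1)])
    fix x assume "0 \<le> x" "x \<le> a"
    thus "\<exists>y. ((\<lambda>u. p u - h u) has_real_derivative y) (at x) \<and> 0 \<le> y"
      using hd pd le by (intro exI[of _ "p' x - h' x"]) (auto intro!: derivative_intros)
  qed
  thus ?thesis using h0 by simp
qed

lemma shift_deriv:
  assumes "(f has_real_derivative d) (at (m + u))"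
  shows "((\<lambda>u. f (m + u)) has_real_derivative d) (at u)"
proof -
  have "((\<lambda>u. m + u) has_real_derivative 1) (at u)" by (auto intro!: derivative_eq_intros)
  from DERIV_chain2[where f=f and g="\<lambda>u. m + u", OF assms this] show ?thesis by simp
qed
lemma shift_deriv':
  assumes "(f has_real_derivative d) (at (m - u))"
  shows "((\<lambda>u. f (m - u)) has_real_derivative - d) (at u)"
proof -
  have "((\<lambda>u. m - u) has_real_derivative -1) (at u)" by (auto intro!: derivative_eq_intros)
  from DERIV_chain2[where f=f and g="\<lambda>u. m - u", OF assms this] show ?thesis by simp
qed

lemma midpoint_lower:
  fixes F f fp :: "real \<Rightarrow> real"
  assumes a: "0 \<le> a"
    and Fd: "\<And>x. m - a \<le> x \<Longrightarrow> x \<le> m + a \<Longrightarrow> (F has_real_derivative f x) (at x)"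
    and fd: "\<And>x. m - a \<le> x \<Longrightarrow> x \<le> m + a \<Longrightarrow> (f has_real_derivative fp x) (at x)"
    and lo: "\<And>u. 0 \<le> u \<Longrightarrow> u \<le> a \<Longrightarrow> c * u \<le> fp (m + u) - fp (m - u)"
  shows "c * a^3 / 6 \<le> F (m + a) - F (m - a) - 2 * a * f m"
proof -
  have s1: "c * v^2 / 2 \<le> f (m + v) + f (m - v) - 2 * f m" if v: "0 \<le> v" "v \<le> a" for v
  proof (rule cmp_deriv[where h' = "\<lambda>u. c * u" and p' = "\<lambda>u. fp (m + u) + - fp (m - u)", OF v(1)])
    fix u assume u: "0 \<le> u" "u \<le> v"
    show "((\<lambda>u. c * u^2 / 2) has_real_derivative c * u) (at u)"
      by (auto intro!: derivative_eq_intros)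
    have d1: "((\<lambda>u. f (m + u)) has_real_derivative fp (m + u)) (at u)"
      using u v by (intro shift_deriv fd) auto
    have d2: "((\<lambda>u. f (m - u)) has_real_derivative - fp (m - u)) (at u)"
      using u v by (intro shift_deriv' fd) auto
    show "((\<lambda>u. f (m + u) + f (m - u) - 2 * f m) has_real_derivative fp (m + u) + - fp (m - u)) (at u)"
      using DERIV_diff[OF DERIV_add[OF d1 d2] DERIV_const] by simp
    show "c * u \<le> fp (m + u) + - fp (m - u)" using lo[of u] u v by simp
  qed simp
  have s2: "c * v^3 / 6 \<le> F (m + v) - F (m - v) - 2 * v * f m" if v: "0 \<le> v" "v \<le> a" for v
  proof (rule cmp_deriv[where h' = "\<lambda>u. c * u^2 / 2" and p' = "\<lambda>u. f (m + u) + f (m - u) - 2 * f m", OF v(1)])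
    fix u assume u: "0 \<le> u" "u \<le> v"
    show "((\<lambda>u. c * u^3 / 6) has_real_derivative c * u^2 / 2) (at u)"
      by (auto intro!: derivative_eq_intros)
    have d1: "((\<lambda>u. F (m + u)) has_real_derivative f (m + u)) (at u)"
      using u v by (intro shift_deriv Fd) auto
    have d2: "((\<lambda>u. F (m - u)) has_real_derivative - f (m - u)) (at u)"
      using u v by (intro shift_deriv' Fd) auto
    have d3: "((\<lambda>u. 2 * u * f m) has_real_derivative 2 * f m) (at u)"
      by (auto intro!: derivative_eq_intros)
    show "((\<lambda>u. F (m + u) - F (m - u) - 2 * u * f m) has_real_derivative f (m + u) + f (m - u) - 2 * f m) (at u)"
      using DERIV_diff[OF DERIV_diff[OF d1 d2] d3] by simp
    show "c * u^2 / 2 \<le> f (m + u) + f (m - u) - 2 * f m" using s1[of u] u v by simp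
  qed simp
  show ?thesis using s2[of a] a by simp
qed

lemma midpoint_upper:
  fixes F f fp :: "real \<Rightarrow> real"
  assumes a: "0 \<le> a"
    and Fd: "\<And>x. m - a \<le> x \<Longrightarrow> x \<le> m + a \<Longrightarrow> (F has_real_derivative f x) (at x)"
    and fd: "\<And>x. m - a \<le> x \<Longrightarrow> x \<le> m + a \<Longrightarrow> (f has_real_derivative fp x) (at x)"
    and hi: "\<And>u. 0 \<le> u \<Longrightarrow> u \<le> a \<Longrightarrow> fp (m + u) - fp (m - u) \<le> c * u"
  shows "F (m + a) - F (m - a) - 2 * a * f m \<le> c * a^3 / 6"
proof -
  have Fd': "((\<lambda>x. - F x) has_real_derivative - f x) (at x)" if "m - a \<le> x" "x \<le> m + a" for x
    using Fd[OF that] by (rule DERIV_minus)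
  have fd': "((\<lambda>x. - f x) has_real_derivative - fp x) (at x)" if "m - a \<le> x" "x \<le> m + a" for x
    using fd[OF that] by (rule DERIV_minus)
  have hi': "(-c) * u \<le> (- fp (m + u)) - (- fp (m - u))" if "0 \<le> u" "u \<le> a" for u
    using hi[OF that] by simp
  have "(-c) * a^3 / 6 \<le> (- F (m + a)) - (- F (m - a)) - 2 * a * (- f m)"
    using midpoint_lower[where F = "\<lambda>x. - F x" and f = "\<lambda>x. - f x" and fp = "\<lambda>x. - fp x" and c = "-c", OF a Fd' fd' hi']
    by simp
  thus ?thesis by simp
qed



lemma mvt_le:
  fixes f f' :: "real \<Rightarrow> real"
  assumes "a \<le> b" "\<And>x. a \<le> x \<Longrightarrow> x \<le> b \<Longrightarrow> (f has_real_derivative f' x) (at x)"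
    "\<And>x. a \<le> x \<Longrightarrow> x \<le> b \<Longrightarrow> f' x \<le> B"
  shows "f b - f a \<le> (b - a) * B"
proof (cases "a = b")
  case False
  hence ab: "a < b" using assms(1) by simp
  have "\<exists>z. a < z \<and> z < b \<and> f b - f a = (b - a) * f' z"
    by (rule MVT2[OF ab assms(2)])
  then obtain z where z: "a < z" "z < b" "f b - f a = (b - a) * f' z" by blast
  thus ?thesis using assms(3)[of z] assms(1) by (simp add: mult_left_mono)
qed simp

lemma mvt_ge:
  fixes f f' :: "real \<Rightarrow> real"
  assumes "a \<le> b" "\<And>x. a \<le> x \<Longrightarrow> x \<le> b \<Longrightarrow> (f has_real_derivative f' x) (at x)"
    "\<And>x. a \<le> x \<Longrightarrow> x \<le> b \<Longrightarrow> B \<le> f' x"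
  shows "(b - a) * B \<le> f b - f a"
proof (cases "a = b")
  case False
  hence ab: "a < b" using assms(1) by simp
  have "\<exists>z. a < z \<and> z < b \<and> f b - f a = (b - a) * f' z"
    by (rule MVT2[OF ab assms(2)])
  then obtain z where z: "a < z" "z < b" "f b - f a = (b - a) * f' z" by blast
  thus ?thesis using assms(3)[of z] assms(1) by (simp add: mult_left_mono)
qed simp

lemma deriv_cont_on:
  assumes "\<And>x. x \<in> S \<Longrightarrow> (f has_real_derivative D x) (at x)"
  shows "continuous_on S f"
  using assms by (meson DERIV_isCont continuous_at_imp_continuous_on)

lemma good_mono: "0 < x \<Longrightarrow> x \<le> y \<Longrightarrow> t + ln x > (0::real) \<Longrightarrow> t + ln y > 0"
proof -
  assume a: "0 < x" "x \<le> y" "t + ln x > 0"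
  hence "ln x \<le> ln y" by (subst ln_le_cancel_iff) auto
  thus ?thesis using a by linarith
qed

lemma cont_ff: "0 < a \<Longrightarrow> t + ln a > 0 \<Longrightarrow> continuous_on {a..b} (ff t)"
proof (rule deriv_cont_on)
  fix x assume "0 < a" "t + ln a > 0" "x \<in> {a..b}"
  hence "0 < x" "t + ln x > 0" using good_mono[of a x t] by auto
  thus "(ff t has_real_derivative f1 t x) (at x)" by (rule D_ff)
qed

lemma cont_gg: "0 < a \<Longrightarrow> t + ln a > 0 \<Longrightarrow> continuous_on {a..b} (gg t)"
proof (rule deriv_cont_on)
  fix x assume "0 < a" "t + ln a > 0" "x \<in> {a..b}"
  hence "0 < x" "t + ln x > 0" using good_mono[of a x t] by auto
  thus "(gg t has_real_derivative g1 t x) (at x)" by (rule D_gg)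
qed

lemma antideriv:
  assumes "continuous_on {lo..hi} f" "lo < x" "x < hi"
  shows "((\<lambda>y. integral {lo..y} f) has_real_derivative f x) (at x)"
proof -
  have d: "((\<lambda>y. integral {lo..y} f) has_real_derivative f x) (at x within {lo..hi})"
    using assms by (intro integral_has_real_derivative) auto
  have e: "at x within {lo..hi} = at x" by (rule at_within_interior) (use assms in simp)
  show ?thesis using d unfolding e .
qed


lemma lo_point:
  fixes k t :: real
  assumes "0 < k" "t + ln k > 0"
  obtains lo where "0 < lo" "lo < k" "t + ln lo > 0"
proof
  define lo where "lo = k * exp (-(t + ln k)/2)"
  show "0 < lo" using assms by (simp add: lo_def)
  show "lo < k" using assms by (simp add: lo_def)
  have "t + ln lo = (t + ln k)/2" using assms by (simp add: lo_def ln_mult field_simps)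
  thus "t + ln lo > 0" using assms by simp
qed

lemma antideriv_setup:
  fixes k t :: real and h :: "real \<Rightarrow> real"
  assumes k: "0 < k" "t + ln k > 0"
    and hc: "\<And>a b. 0 < a \<Longrightarrow> t + ln a > 0 \<Longrightarrow> continuous_on {a..b} h"
  obtains H where "\<And>x. k \<le> x \<Longrightarrow> x \<le> k + 1 \<Longrightarrow> (H has_real_derivative h x) (at x)"
    "integral {k..k+1} h = H (k+1) - H k"
proof -
  obtain lo where lo: "0 < lo" "lo < k" "t + ln lo > 0" using lo_point[OF k] by blast
  define H where "H = (\<lambda>y. integral {lo..y} h)"
  have c: "continuous_on {lo..k+2} h" using hc lo by blast
  have Hd: "(H has_real_derivative h x) (at x)" if "k \<le> x" "x \<le> k + 1" for x
    unfolding H_def using that lo by (intro antideriv[OF c]) auto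
  have "integral {lo..k} h + integral {k..k+1} h = integral {lo..k+1} h"
    using lo by (intro Henstock_Kurzweil_Integration.integral_combine integrable_continuous_real continuous_on_subset[OF c]) auto
  hence "integral {k..k+1} h = H (k+1) - H k" unfolding H_def by simp
  from that[OF Hd this] show ?thesis .
qed



lemma good_ge:
  fixes k x t :: real
  assumes "0 < k" "t + ln k > 0" "k \<le> x"
  shows "0 < x" "t + ln x > 0"
  using assms good_mono[of k x t] by auto

lemma Mk_lower:
  fixes k :: real
  assumes k: "0 < k" "t + ln k > 0"
  shows "f2 t (k+1) / 24 \<le> integral {k..k+1} (ff t) - ff t (k + 1/2)"
proof -
  obtain F where Fd: "\<And>x. k \<le> x \<Longrightarrow> x \<le> k + 1 \<Longrightarrow> (F has_real_derivative ff t x) (at x)"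
    and intF: "integral {k..k+1} (ff t) = F (k+1) - F k"
    using antideriv_setup[OF k cont_ff] by blast
  define m where "m = k + 1/2"
  have mm: "m - 1/2 = k" "m + 1/2 = k + 1" by (auto simp: m_def)
  have "2 * f2 t (k+1) * (1/2)^3 / 6 \<le> F (m + 1/2) - F (m - 1/2) - 2 * (1/2) * ff t m"
  proof (rule midpoint_lower[where fp = "f1 t"])
    fix x assume x: "m - 1/2 \<le> x" "x \<le> m + 1/2"
    hence x': "k \<le> x" "x \<le> k + 1" unfolding mm by auto
    show "(F has_real_derivative ff t x) (at x)" using Fd[OF x'] .
    show "(ff t has_real_derivative f1 t x) (at x)" using D_ff good_ge[OF k x'(1)] by blast
  next
    fix u :: real assume u: "0 \<le> u" "u \<le> 1/2"
    have "(m + u - (m - u)) * f2 t (k+1) \<le> f1 t (m + u) - f1 t (m - u)"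
    proof (rule mvt_ge)
      fix x assume "m - u \<le> x" "x \<le> m + u"
      hence x: "k \<le> x" "x \<le> k + 1" using u by (auto simp: m_def)
      note g = good_ge[OF k x(1)]
      show "(f1 t has_real_derivative f2 t x) (at x)" using D_f1[OF g] .
      show "f2 t (k + 1) \<le> f2 t x" using mono_facts(1)[OF g(1) x(2) g(2)] .
    qed (use u in auto)
    thus "2 * f2 t (k + 1) * u \<le> f1 t (m + u) - f1 t (m - u)" by (simp add: algebra_simps)
  qed simp
  thus ?thesis unfolding intF mm by (simp add: m_def power3_eq_cube)
qed

lemma Mk_upper:
  fixes k :: real
  assumes k: "0 < k" "t + ln k > 0"
  shows "integral {k..k+1} (ff t) - ff t (k + 1/2) \<le> (f2 t k + f2 t (k + 1/2)) / 48"
proof -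
  obtain F where Fd: "\<And>x. k \<le> x \<Longrightarrow> x \<le> k + 1 \<Longrightarrow> (F has_real_derivative ff t x) (at x)"
    and intF: "integral {k..k+1} (ff t) = F (k+1) - F k"
    using antideriv_setup[OF k cont_ff] by blast
  define m where "m = k + 1/2"
  have mm: "m - 1/2 = k" "m + 1/2 = k + 1" by (auto simp: m_def)
  have gm: "0 < m" "t + ln m > 0" using good_ge[OF k, of m] by (auto simp: m_def)
  have "F (m + 1/2) - F (m - 1/2) - 2 * (1/2) * ff t m \<le> (f2 t k + f2 t m) * (1/2)^3 / 6"
  proof (rule midpoint_upper[where fp = "f1 t"])
    fix x assume x: "m - 1/2 \<le> x" "x \<le> m + 1/2"
    hence x': "k \<le> x" "x \<le> k + 1" unfolding mm by auto
    show "(F has_real_derivative ff t x) (at x)" using Fd[OF x'] .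
    show "(ff t has_real_derivative f1 t x) (at x)" using D_ff good_ge[OF k x'(1)] by blast
  next
    fix u :: real assume u: "0 \<le> u" "u \<le> 1/2"
    have A: "f1 t (m + u) - f1 t m \<le> (m + u - m) * f2 t m"
    proof (rule mvt_le)
      fix x assume x0: "m \<le> x" "x \<le> m + u"
      hence x: "k \<le> x" using u by (auto simp: m_def)
      note g = good_ge[OF k x]
      show "(f1 t has_real_derivative f2 t x) (at x)" using D_f1[OF g] .
      show "f2 t x \<le> f2 t m" using mono_facts(1)[OF gm(1) x0(1) gm(2)] .
    qed (use u in auto)
    have B: "f1 t m - f1 t (m - u) \<le> (m - (m - u)) * f2 t k"
    proof (rule mvt_le)
      fix x assume x0: "m - u \<le> x" "x \<le> m"
      hence x: "k \<le> x" using u by (auto simp: m_def)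
      note g = good_ge[OF k x]
      show "(f1 t has_real_derivative f2 t x) (at x)" using D_f1[OF g] .
      show "f2 t x \<le> f2 t k" using mono_facts(1)[OF k(1) x k(2)] .
    qed (use u in auto)
    show "f1 t (m + u) - f1 t (m - u) \<le> (f2 t k + f2 t m) * u"
      using A B by (simp add: algebra_simps)
  qed simp
  thus ?thesis unfolding intF mm by (simp add: m_def power3_eq_cube)
qed

lemma Gk_lower:
  fixes k :: real
  assumes k: "0 < k" "t + ln k > 0"
  shows "gg t (k + 1/2) \<le> integral {k..k+1} (gg t)"
proof -
  obtain G where Gd: "\<And>x. k \<le> x \<Longrightarrow> x \<le> k + 1 \<Longrightarrow> (G has_real_derivative gg t x) (at x)"
    and intG: "integral {k..k+1} (gg t) = G (k+1) - G k"
    using antideriv_setup[OF k cont_gg] by blast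
  define m where "m = k + 1/2"
  have mm: "m - 1/2 = k" "m + 1/2 = k + 1" by (auto simp: m_def)
  have "0 * (1/2)^3 / 6 \<le> G (m + 1/2) - G (m - 1/2) - 2 * (1/2) * gg t m"
  proof (rule midpoint_lower[where fp = "g1 t"])
    fix x assume x: "m - 1/2 \<le> x" "x \<le> m + 1/2"
    hence x': "k \<le> x" "x \<le> k + 1" unfolding mm by auto
    show "(G has_real_derivative gg t x) (at x)" using Gd[OF x'] .
    show "(gg t has_real_derivative g1 t x) (at x)" using D_gg good_ge[OF k x'(1)] by blast
  next
    fix u :: real assume u: "0 \<le> u" "u \<le> 1/2"
    have x: "k \<le> m - u" "m - u \<le> m + u" using u by (auto simp: m_def)
    note g = good_ge[OF k x(1)]
    have "g1 t (m - u) \<le> g1 t (m + u)" using mono_facts(6)[OF g(1) x(2) g(2)] .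
    thus "0 * u \<le> g1 t (m + u) - g1 t (m - u)" by simp
  qed simp
  thus ?thesis unfolding intG mm by (simp add: m_def)
qed



lemma alg_u1:
  fixes y :: real assumes y: "y \<ge> 1"
  shows "2*(1/(2*y))^3/(3*(1-(1/(2*y))^2)) = 1/(3*y*(4*y^2-1))"
proof -
  have y2: "y^2 \<ge> 1" using y by (simp add: one_le_power)
  have p: "4*y^2 - 1 > 0" using y2 by simp
  have q: "1-(1/(2*y))^2 = (4*y^2-1)/(4*y^2)" using y by (simp add: field_simps power2_eq_square)
  show ?thesis unfolding q using p y by (simp add: field_simps power2_eq_square power3_eq_cube)
qed

lemma inv_diff_sq:
  fixes a b :: real assumes "a \<noteq> 0" "b \<noteq> 0"
  shows "1/(24*a^2) - 1/(24*b^2) = (b^2 - a^2)/(24*(a*b)^2)"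
  using assms by (simp add: field_simps power2_eq_square)

lemma alg_u2:
  fixes y :: real assumes y: "y \<ge> 1"
  shows "1/(24*(y-1/2)^2) - 1/(24*(y+1/2)^2) = 4*y/(3*(4*y^2-1)^2)"
proof -
  have c: "y - 1/2 \<noteq> 0" "y + 1/2 \<noteq> 0" using y by auto
  have d: "(y+1/2)^2 - (y-1/2)^2 = 2*y" by (simp add: power2_eq_square algebra_simps)
  have e: "(y-1/2)*(y+1/2) = (4*y^2-1)/4" by (simp add: power2_eq_square algebra_simps)
  have p: "4*y^2-1 \<noteq> 0" using y by (smt (verit) one_le_power)
  define P where "P = 4*y^2-1"
  have "P \<noteq> 0" using p by (simp add: P_def)
  hence "2*y/(24*(P/4)^2) = 4*y/(3*P^2)" by (simp add: field_simps power2_eq_square)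
  thus ?thesis unfolding inv_diff_sq[OF c] d e P_def .
qed

lemma alg_u3:
  fixes y :: real assumes y: "y \<ge> 1"
  shows "1/(3*y*(4*y^2-1)) \<le> 4*y/(3*(4*y^2-1)^2)"
proof -
  have y2: "y^2 \<ge> 1" using y by (simp add: one_le_power)
  have p: "4*y^2 - 1 > 0" using y2 by simp
  have "1/(3*y*(4*y^2-1)) = (4*y^2-1)/(3*y*(4*y^2-1)^2)" using p y
    by (simp add: power2_eq_square)
  also have "\<dots> \<le> (4*y^2)/(3*y*(4*y^2-1)^2)" using p y by (intro divide_right_mono) auto
  also have "\<dots> = 4*y/(3*(4*y^2-1)^2)" using y by (simp add: power2_eq_square)
  finally show ?thesis .
qed

lemma alg_l1:
  fixes y :: real assumes y: "y \<ge> 1"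
  shows "1/(24*y^2) - 1/(24*(y+1)^2) \<le> 2*(1/(2*y))^3/3"
proof -
  have c: "y \<noteq> 0" "y + 1 \<noteq> 0" using y by auto
  have d: "(y+1)^2 - y^2 = 2*y+1" by (simp add: power2_eq_square algebra_simps)
  have e1: "1/(24*y^2) - 1/(24*(y+1)^2) = (2*y+1)/(24*y^2*(y+1)^2)"
    unfolding inv_diff_sq[OF c] d by (simp add: power_mult_distrib)
  have e2: "2*(1/(2*y))^3/3 = 1/(12*y^3)" using y by (simp add: field_simps power3_eq_cube)
  have "(2*y+1)*(12*y^3) \<le> 24*y^2*(y+1)^2 * 1" using y
    by (simp add: power2_eq_square power3_eq_cube algebra_simps)
  hence "(2*y+1)/(24*y^2*(y+1)^2) \<le> 1/(12*y^3)" using y by (simp add: divide_simps)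
  thus ?thesis unfolding e1 e2 .
qed



lemma log_ineq:
  fixes u :: real
  assumes u: "0 \<le> u" "u \<le> 1/2"
  shows "2*u^3/3 \<le> ln (1+u) - ln (1-u) - 2*u"
    "ln (1+u) - ln (1-u) - 2*u \<le> 2*u^3/(3*(1-u^2))"
proof -
  have d: "((\<lambda>w. ln (1+w) - ln (1-w) - 2*w) has_real_derivative 1/(1+w) + 1/(1-w) - 2) (at w)"
    if "0 \<le> w" "w \<le> u" for w
    using that u by (auto intro!: derivative_eq_intros)
  show "2*u^3/3 \<le> ln (1+u) - ln (1-u) - 2*u"
  proof (rule cmp_deriv[OF u(1) _ d, where h' = "\<lambda>w. 2*w^2"])
    fix w assume w: "0 \<le> w" "w \<le> u"
    show "((\<lambda>w. 2*w^3/3) has_real_derivative 2*w^2) (at w)"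
      by (auto intro!: derivative_eq_intros)
    have "w \<le> 1/2" using w u by simp
    hence "w^2 \<le> (1/2)^2" using w by (intro power_mono) auto
    moreover have "(1/2::real)^2 = 1/4" by (simp add: power2_eq_square)
    ultimately have "w^2 < 1" by linarith
    hence v1: "w < 1" "w^2 < 1" using w u by auto
    have "1/(1+w) + 1/(1-w) - 2 = 2*w^2/(1-w^2)" using v1 w
      by (simp add: field_simps power2_eq_square)
    also have "2*w^2/(1-w^2) \<ge> 2*w^2" using v1 w
      by (simp add: field_simps mult_le_cancel_left1)
    finally show "2*w^2 \<le> 1/(1+w) + 1/(1-w) - 2" .
  qed auto
  have "u^2 \<le> (1/2)^2" using u by (intro power_mono) auto
  moreover have "(1/2::real)^2 = 1/4" by (simp add: power2_eq_square)
  ultimately have u1: "u^2 < 1" by linarith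
  define C where "C = 2/(3*(1-u^2))"
  have "ln (1+u) - ln (1-u) - 2*u \<le> C*u^3"
  proof (rule cmp_deriv[OF u(1) d, where p = "\<lambda>w. C*w^3" and p' = "\<lambda>w. C*(3*w^2)"])
    fix w assume w: "0 \<le> w" "w \<le> u"
    have w1: "w < 1" using w u by auto
    have w2: "w^2 \<le> u^2" using w by (intro power_mono) auto
    hence w3: "w^2 < 1" using u1 by simp
    show "((\<lambda>w. C*w^3) has_real_derivative C*(3*w^2)) (at w)"
      by (auto intro!: derivative_eq_intros)
    have "1/(1+w) + 1/(1-w) - 2 = 2*w^2/(1-w^2)" using w1 w w3
      by (simp add: field_simps power2_eq_square)
    also have "\<dots> \<le> 2*w^2/(1-u^2)" using w2 w3 u1
      by (intro divide_left_mono) auto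
    also have "\<dots> = C*(3*w^2)"
    proof -
      have "1 - u^2 \<noteq> 0" using u1 by simp
      thus ?thesis unfolding C_def by (simp add: field_simps)
    qed
    finally show "1/(1+w) + 1/(1-w) - 2 \<le> C*(3*w^2)" .
  qed auto
  thus "ln (1+u) - ln (1-u) - 2*u \<le> 2*u^3/(3*(1-u^2))" unfolding C_def by simp
qed

definition eps :: "nat \<Rightarrow> real" where
  "eps k = harm k - euler_mascheroni - ln (real k + 1/2)"

lemma eps_lim: "eps \<longlonglongrightarrow> 0"
proof -
  have a: "(\<lambda>n. harm n - ln (real n) - euler_mascheroni) \<longlonglongrightarrow> 0"
    using euler_mascheroni_LIMSEQ by (simp add: LIM_zero)
  have b: "(\<lambda>n. ln (real n + 1/2) - ln (real n)) \<longlonglongrightarrow> 0"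
    by real_asymp
  have "(\<lambda>n. (harm n - ln (real n) - euler_mascheroni) - (ln (real n + 1/2) - ln (real n))) \<longlonglongrightarrow> 0 - 0"
    by (intro tendsto_diff a b)
  thus ?thesis unfolding eps_def by (simp add: algebra_simps)
qed

lemma eps_step: "eps k - eps (Suc k) = (ln (1 + 1/(2*real k+2)) - ln (1 - 1/(2*real k+2))) - 2 * (1/(2*real k+2))"
proof -
  have e1: "1 + 1/(2*real k+2) = (real k + 3/2) / (real k + 1)" by (simp add: field_simps)
  have e2: "1 - 1/(2*real k+2) = (real k + 1/2) / (real k + 1)" by (simp add: field_simps)
  have "ln ((real k + 3/2) / (real k + 1)) - ln ((real k + 1/2) / (real k + 1)) = ln (real k + 3/2) - ln (real k + 1/2)"
    by (simp add: ln_div)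
  moreover have "2 * (1/(2*real k+2)) = 1 / (real k + 1)" by (simp add: field_simps)
  moreover have "real (Suc k) + 1/2 = real k + 3/2" by simp
  ultimately show ?thesis unfolding eps_def e1 e2 harm_Suc
    by (simp add: inverse_eq_divide algebra_simps)
qed

lemma eps_step_y:
  fixes k :: nat
  defines "u \<equiv> 1/(2*(real k + 1))"
  shows "eps k - eps (Suc k) = ln (1+u) - ln (1-u) - 2*u" "0 \<le> u" "u \<le> 1/2"
proof -
  have "2*real k+2 = 2*(real k + 1)" by simp
  thus "eps k - eps (Suc k) = ln (1+u) - ln (1-u) - 2*u" using eps_step[of k] unfolding u_def by simp
  show "0 \<le> u" "u \<le> 1/2" unfolding u_def by (auto simp: field_simps)
qed

lemma eps_upper: "eps k \<le> 1 / (24 * (real k + 1/2)^2)"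
proof -
  define c where "c = (\<lambda>k. eps k - 1 / (24 * (real k + 1/2)^2))"
  have "incseq c"
  proof (rule incseq_SucI)
    fix k
    define y where "y = real k + 1"
    have y: "y \<ge> 1" by (simp add: y_def)
    note st = eps_step_y[of k, folded y_def]
    have "eps k - eps (Suc k) \<le> 2*(1/(2*y))^3/(3*(1-(1/(2*y))^2))"
      unfolding st(1) by (rule log_ineq(2)[OF st(2,3)])
    also have "\<dots> = 1/(3*y*(4*y^2-1))" by (rule alg_u1[OF y])
    also have "\<dots> \<le> 4*y/(3*(4*y^2-1)^2)" by (rule alg_u3[OF y])
    also have "\<dots> = 1/(24*(y-1/2)^2) - 1/(24*(y+1/2)^2)" by (rule alg_u2[OF y, symmetric])
    also have "y - 1/2 = real k + 1/2" by (simp add: y_def)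
    also have "y + 1/2 = real (Suc k) + 1/2" by (simp add: y_def)
    finally show "c k \<le> c (Suc k)" unfolding c_def by simp
  qed
  moreover have "c \<longlonglongrightarrow> 0"
  proof -
    have "(\<lambda>k. 1 / (24 * (real k + 1/2)^2)) \<longlonglongrightarrow> 0" by real_asymp
    from tendsto_diff[OF eps_lim this] show ?thesis unfolding c_def by simp
  qed
  ultimately have "c k \<le> 0" by (rule incseq_le)
  thus ?thesis unfolding c_def by simp
qed

lemma eps_lower: "1 / (24 * (real k + 1)^2) \<le> eps k"
proof -
  define c where "c = (\<lambda>k. eps k - 1 / (24 * (real k + 1)^2))"
  have "decseq c"
  proof (rule decseq_SucI)
    fix k
    define y where "y = real k + 1"
    have y: "y \<ge> 1" by (simp add: y_def)
    note st = eps_step_y[of k, folded y_def]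
    have "1 / (24 * (real k + 1)^2) - 1 / (24 * (real (Suc k) + 1)^2) = 1/(24*y^2) - 1/(24*(y+1)^2)"
      by (simp add: y_def)
    also have "\<dots> \<le> 2*(1/(2*y))^3/3" by (rule alg_l1[OF y])
    also have "\<dots> \<le> eps k - eps (Suc k)"
      unfolding st(1) by (rule log_ineq(1)[OF st(2,3)])
    finally show "c (Suc k) \<le> c k" unfolding c_def by simp
  qed
  moreover have "c \<longlonglongrightarrow> 0"
  proof -
    have "(\<lambda>k. 1 / (24 * (real k + 1)^2)) \<longlonglongrightarrow> 0" by real_asymp
    from tendsto_diff[OF eps_lim this] show ?thesis unfolding c_def by simp
  qed
  ultimately have "0 \<le> c k" by (rule decseq_ge)
  thus ?thesis unfolding c_def by simp
qed



definition dd :: "real \<Rightarrow> nat \<Rightarrow> real" where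
  "dd t k = integral {real k..real k+1} (\<lambda>x. 1/(t+ln x)) - 1/(harm k - euler_mascheroni + t)"

lemma ff_eta: "(\<lambda>x. 1/(t+ln x)) = ff t" by (simp add: ff_def fun_eq_iff)

lemma Ek_bounds:
  fixes k :: nat
  assumes k: "k \<ge> 1" "t + ln (real k) > 0"
  shows "ff t (real k + 1/2) - 1/(harm k - euler_mascheroni + t) \<le> gg t (real k + 1/2)"
    "gg t (real k + 1) \<le> ff t (real k + 1/2) - 1/(harm k - euler_mascheroni + t)"
    "harm k - euler_mascheroni + t > 0"
proof -
  define m where "m = real k + 1/2"
  define L where "L = t + ln m"
  define e where "e = eps k"
  have m: "m > 0" "real k \<le> m" using k by (auto simp: m_def)
  have L: "L > 0" unfolding L_def using good_mono[of "real k" m t] k m by auto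
  have e1: "e \<le> 1/(24*m^2)" unfolding e_def m_def by (rule eps_upper)
  have e2: "1/(24*(real k + 1)^2) \<le> e" unfolding e_def by (rule eps_lower)
  have e0: "e > 0" using e2 by (smt (verit) divide_pos_pos zero_less_power of_nat_less_0_iff)
  have H: "harm k - euler_mascheroni + t = L + e" unfolding L_def e_def eps_def m_def by simp
  show "harm k - euler_mascheroni + t > 0" unfolding H using L e0 by simp
  have Ek: "ff t m - 1/(L + e) = e / (L * (L + e))"
    unfolding ff_def L_def[symmetric] using L e0 by (simp add: field_simps)
  have "e / (L * (L + e)) \<le> e / (L * L)" using L e0
    by (intro divide_left_mono mult_left_mono) auto
  also have "\<dots> \<le> (1/(24*m^2)) / (L*L)" using L e1 by (intro divide_right_mono) auto
  also have "\<dots> = gg t m" unfolding gg_def L_def by (simp add: power2_eq_square)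
  finally show "ff t (real k + 1/2) - 1/(harm k - euler_mascheroni + t) \<le> gg t (real k + 1/2)"
    unfolding H Ek[folded m_def] m_def[symmetric] .
  define L1 where "L1 = t + ln (real k + 1)"
  have "ln ((real k + 1/2)/(real k + 1)) \<le> (real k + 1/2)/(real k + 1) - 1"
    by (rule ln_le_minus_one) simp
  moreover have "ln ((real k + 1/2)/(real k + 1)) = ln (real k + 1/2) - ln (real k + 1)"
    by (rule ln_divide_pos) auto
  moreover have "(real k + 1/2)/(real k + 1) - 1 = - 1/(2*real k + 2)"
    by (simp add: field_simps)
  ultimately have lnd: "ln (real k + 1/2) - ln (real k + 1) \<le> - 1/(2*real k + 2)"
    by simp
  have "1/(24*m^2) \<le> 1/(2*real k + 2)"
  proof -
    have "2*real k + 2 \<le> 24*m^2" unfolding m_def using k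
      by (simp add: power2_eq_square algebra_simps)
    moreover have "0 < m^2 * (2*real k + 2)" using m by simp
    ultimately show ?thesis by (intro divide_left_mono) auto
  qed
  hence LL1: "L + e \<le> L1" using e1 lnd unfolding L_def L1_def m_def by linarith
  have LL1': "L \<le> L1" using LL1 e0 by simp
  have "gg t (real k + 1) = (1/(24*(real k + 1)^2)) / (L1*L1)"
    unfolding gg_def L1_def by (simp add: power2_eq_square)
  also have "\<dots> \<le> e / (L1*L1)" using e2 L LL1' by (intro divide_right_mono) auto
  also have "\<dots> \<le> e / (L * (L + e))" using L e0 LL1 LL1'
    by (intro divide_left_mono mult_mono) auto
  finally show "gg t (real k + 1) \<le> ff t (real k + 1/2) - 1/(harm k - euler_mascheroni + t)"
    unfolding H Ek[folded m_def] m_def[symmetric] .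
qed

lemma dd_split: "dd t k = (integral {real k..real k+1} (ff t) - ff t (real k + 1/2))
   + (ff t (real k + 1/2) - 1/(harm k - euler_mascheroni + t))"
  unfolding dd_def ff_eta by simp

lemma dd_lower:
  fixes k :: nat
  assumes k: "k \<ge> 1" "t + ln (real k) > 0"
  shows "gg t (real k + 1) + f2 t (real k + 1) / 24 \<le> dd t k"
  using Mk_lower[of "real k" t] Ek_bounds(2)[OF k] k unfolding dd_split by simp

lemma dd_upper:
  fixes k :: nat
  assumes k: "k \<ge> 1" "t + ln (real k) > 0"
  shows "dd t k \<le> integral {real k..real k+1} (gg t) + (f2 t (real k) + f2 t (real k + 1/2)) / 48"
  using Mk_upper[of "real k" t] Ek_bounds(1)[OF k] Gk_lower[of "real k" t] k unfolding dd_split by linarith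

lemma dd_pos:
  fixes k :: nat
  assumes k: "k \<ge> 1" "t + ln (real k) > 0"
  shows "dd t k > 0"
proof -
  have "0 < real k + 1" by simp
  moreover have "t + ln (real k + 1) > 0" using good_mono[of "real k" "real k + 1" t] k by simp
  ultimately have "gg t (real k + 1) > 0" "f2 t (real k + 1) > 0" using pos_facts by auto
  thus ?thesis using dd_lower[OF k] by simp
qed

lemma ph_step_lower:
  fixes x :: real
  assumes x: "0 < x" "t + ln x > 0"
  shows "ph t x - ph t (x + 1) \<le> f2 t x / 24"
proof -
  have "(x + 1 - x) * (- (f2 t x / 24)) \<le> ph t (x+1) - ph t x"
  proof (rule mvt_ge)
    fix y assume y: "x \<le> y" "y \<le> x + 1"
    have g: "0 < y" "t + ln y > 0" using good_mono[of x y t] x y by auto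
    show "(ph t has_real_derivative - f2 t y / 24) (at y)"
      by (rule DERIV_cong[OF D_ph[OF g]]) (simp add: f2_eq)
    show "- (f2 t x / 24) \<le> - f2 t y / 24" using mono_facts(1)[OF x(1) y(1) x(2)] by simp
  qed simp
  thus ?thesis by simp
qed

lemma ph_half_upper:
  fixes k :: real
  assumes k: "0 < k - 1/2" "t + ln (k - 1/2) > 0"
  shows "(f2 t k + f2 t (k + 1/2)) / 48 \<le> ph t (k - 1/2) - ph t (k + 1/2)"
proof -
  have A: "(k - (k - 1/2)) * (- (f2 t k / 24)) \<ge> ph t k - ph t (k - 1/2)"
  proof (rule mvt_le)
    fix y assume y: "k - 1/2 \<le> y" "y \<le> k"
    have g: "0 < y" "t + ln y > 0" using good_mono[of "k-1/2" y t] k y by auto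
    show "(ph t has_real_derivative - f2 t y / 24) (at y)"
      by (rule DERIV_cong[OF D_ph[OF g]]) (simp add: f2_eq)
    show "- f2 t y / 24 \<le> - (f2 t k / 24)" using mono_facts(1)[OF g(1) y(2) g(2)] by simp
  qed simp
  have gk: "0 < k" "t + ln k > 0" using good_mono[of "k-1/2" k t] k by auto
  have B: "(k + 1/2 - k) * (- (f2 t (k + 1/2) / 24)) \<ge> ph t (k + 1/2) - ph t k"
  proof (rule mvt_le)
    fix y assume y: "k \<le> y" "y \<le> k + 1/2"
    have g: "0 < y" "t + ln y > 0" using good_mono[of k y t] gk y by auto
    show "(ph t has_real_derivative - f2 t y / 24) (at y)"
      by (rule DERIV_cong[OF D_ph[OF g]]) (simp add: f2_eq)
    show "- f2 t y / 24 \<le> - (f2 t (k + 1/2) / 24)" using mono_facts(1)[OF g(1) y(2) g(2)] by simp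
  qed simp
  show ?thesis using A B by simp
qed

lemma gg_int_upper:
  fixes x :: real
  assumes x: "0 < x" "t + ln x > 0"
  shows "integral {x..x+1} (gg t) \<le> gg t x"
proof -
  have "integral {x..x+1} (gg t) \<le> integral {x..x+1} (\<lambda>_. gg t x)"
  proof (rule integral_le)
    show "gg t integrable_on {x..x+1}" using cont_gg[OF x] by (rule integrable_continuous_real)
    show "(\<lambda>_. gg t x) integrable_on {x..x+1}"
      by (rule integrable_continuous_real) (rule continuous_on_const)
    fix y assume "y \<in> {x..x+1}"
    thus "gg t y \<le> gg t x" using mono_facts(2)[OF x(1) _ x(2)] by auto
  qed
  thus ?thesis by simp
qed



lemma gg_int: "0 < a \<Longrightarrow> t + ln a > 0 \<Longrightarrow> gg t integrable_on {a..b}"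
  by (rule integrable_continuous_real[OF cont_gg])

lemma ph_ftc:
  fixes a b :: real
  assumes a: "0 < a" "t + ln a > 0" and ab: "a \<le> b"
  shows "((\<lambda>x. gg t x + hh t x) has_integral (ph t a - ph t b)) {a..b}"
proof -
  have "((\<lambda>x. - (gg t x + hh t x)) has_integral (ph t b - ph t a)) {a..b}"
  proof (rule fundamental_theorem_of_calculus[OF ab])
    fix x assume "x \<in> {a..b}"
    hence g: "0 < x" "t + ln x > 0" using good_mono[of a x t] a by auto
    show "(ph t has_vector_derivative - (gg t x + hh t x)) (at x within {a..b})"
      using D_ph[OF g] by (simp add: has_real_derivative_iff_has_vector_derivative[symmetric] has_field_derivative_at_within)
  qed
  from has_integral_neg[OF this] show ?thesis by (simp add: algebra_simps)
qed

lemma hh_le: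
  assumes x: "0 < x" "t + ln x > 0" and a: "0 < a" "a \<le> x" "t + ln a > 0"
  shows "hh t x \<le> (2/(t + ln a)) * gg t x"
proof -
  have L: "t + ln a \<le> t + ln x" using a x by simp
  obtain l where l: "ln x = l - t" "l > 0" "l \<noteq> 0" using x by (metis add_diff_cancel_left' less_irrefl)
  have "hh t x = (2/(t + ln x)) * gg t x" unfolding hh_def gg_def using x
    by (simp add: l field_simps power2_eq_square power3_eq_cube)
  also have "\<dots> \<le> (2/(t + ln a)) * gg t x"
    using pos_facts(2)[OF x] L a x by (intro mult_right_mono divide_left_mono) (auto intro: mult_pos_pos)
  finally show ?thesis .
qed

lemma gg_int_ph:
  fixes a b :: real
  assumes a: "0 < a" "t + ln a > 0" and ab: "a \<le> b"
  shows "integral {a..b} (gg t) \<le> ph t a - ph t b"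
    "ph t a - ph t b \<le> (1 + 2/(t + ln a)) * integral {a..b} (gg t)"
proof -
  have I: "(gg t has_integral integral {a..b} (gg t)) {a..b}"
    using gg_int[OF a] by (rule integrable_integral)
  have x: "0 < x" "t + ln x > 0" if "x \<in> {a..b}" for x
    using good_mono[of a x t] a that by auto
  show "integral {a..b} (gg t) \<le> ph t a - ph t b"
  proof (rule has_integral_le[OF I ph_ftc[OF a ab]])
    fix y assume "y \<in> {a..b}"
    thus "gg t y \<le> gg t y + hh t y" using pos_facts(3)[OF x[OF \<open>y \<in> {a..b}\<close>]] by simp
  qed
  show "ph t a - ph t b \<le> (1 + 2/(t + ln a)) * integral {a..b} (gg t)"
  proof (rule has_integral_le[OF ph_ftc[OF a ab] has_integral_mult_right[OF I]])
    fix x assume xa: "x \<in> {a..b}"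
    thus "gg t x + hh t x \<le> (1 + 2/(t + ln a)) * gg t x"
      using hh_le[OF x[OF xa] a(1) _ a(2)] by (auto simp: algebra_simps)
  qed
qed

lemma gg_improper:
  fixes a :: real
  assumes a: "0 < a" "t + ln a > 0"
  shows "gg t integrable_on {a..}"
    "(\<lambda>n. integral {a..real n} (gg t)) \<longlonglongrightarrow> integral {a..} (gg t)"
    "\<And>b. a \<le> b \<Longrightarrow> integral {a..b} (gg t) \<le> integral {a..} (gg t)"
    "integral {a..} (gg t) \<le> ph t a"
    "0 \<le> integral {a..} (gg t)"
proof -
  have nn: "0 \<le> gg t x" if "a \<le> x" for x
    using pos_facts(2)[of x t] good_mono[of a x t] a that by fastforce
  have intab: "integral {a..b} (gg t) \<le> ph t a" for b
  proof (cases "a \<le> b")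
    case True
    thus ?thesis using gg_int_ph(1)[OF a True] pos_facts(4)[of b t] good_mono[of a b t] a by fastforce
  next
    case False
    thus ?thesis using pos_facts(4)[OF a] by simp
  qed
  define f where "f \<equiv> \<lambda>n x. if x \<in> {a..of_nat n} then gg t x else 0"
  have has_integral_f: "\<And>n. (f n has_integral (integral {a..of_nat n} (gg t))) {a..}"
    unfolding f_def
    by (metis (no_types, lifting) ext Icc_subset_Ici_iff order.refl
        has_integral_restrict gg_int[OF a] integrable_integral)
  have integral_f: "integral {a..} (f n) = integral {a..of_nat n} (gg t)" for n
    using has_integral_f by (rule integral_unique)
  have *: "gg t integrable_on {a..} \<and> (\<lambda>n. integral {a..} (f n)) \<longlonglongrightarrow> integral {a..} (gg t)"
  proof (intro monotone_convergence_increasing allI ballI)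
    fix n
    show "f n integrable_on {a..}"
      using has_integral_f by blast
  next
    fix n x
    assume "x \<in> {a..}"
    thus "f n x \<le> f (Suc n) x" using nn by (auto simp: f_def)
  next
    fix x :: real assume x: "x \<in> {a..}"
    have "eventually (\<lambda>n. real n \<ge> x) at_top"
      by (meson eventually_sequentiallyI nat_ceiling_le_eq)
    with x have "eventually (\<lambda>n. f n x = gg t x) at_top"
      by (simp add: eventually_mono f_def)
    thus "(\<lambda>n. f n x) \<longlonglongrightarrow> gg t x" by (simp add: tendsto_eventually)
  next
    have "norm (integral {a..} (f n)) \<le> ph t a" for n
    proof -
      have "0 \<le> integral {a..of_nat n} (gg t)"
        using nn by (intro integral_nonneg gg_int[OF a]) auto
      thus ?thesis unfolding integral_f using intab[of "of_nat n"] by simp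
    qed
    thus "bounded (range(\<lambda>k. integral {a..} (f k)))"
      by (metis (no_types, lifting) boundedI rangeE)
  qed
  show gi: "gg t integrable_on {a..}" using * by blast
  show lim: "(\<lambda>n. integral {a..real n} (gg t)) \<longlonglongrightarrow> integral {a..} (gg t)"
    using * unfolding integral_f by simp
  show sub: "integral {a..b} (gg t) \<le> integral {a..} (gg t)" if "a \<le> b" for b
    using that gi nn by (intro integral_subset_le gg_int[OF a]) auto
  show "integral {a..} (gg t) \<le> ph t a"
    using lim by (rule LIMSEQ_le_const2) (use intab in auto)
  show "0 \<le> integral {a..} (gg t)"
    using gi nn by (intro integral_nonneg) auto
qed



lemma theta_sum:
  fixes n m :: nat
  assumes n: "n \<ge> 1" "t + ln (real n) > 0" and nm: "n \<le> m"
  shows "theta_n t n m = (\<Sum>k=n..<m. dd t k)"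
  using nm
proof (induction m rule: dec_induct)
  case base
  show ?case unfolding theta_n_def by simp
next
  case (step m)
  have "integral {real n..real m} (ff t) + integral {real m..real m + 1} (ff t) = integral {real n..real m + 1} (ff t)"
    using step n by (intro Henstock_Kurzweil_Integration.integral_combine integrable_continuous_real cont_ff) auto
  thus ?case using step.IH step.hyps unfolding theta_n_def dd_def ff_eta
    by (simp add: algebra_simps)
qed

lemma theta_split:
  fixes n m :: nat
  assumes n: "n \<ge> 1" "t + ln (real n) > 0" and nm: "n \<le> p" "p \<le> m"
  shows "theta_n t n m = theta_n t n p + theta_n t p m"
proof -
  have p: "p \<ge> 1" "t + ln (real p) > 0" using n nm good_mono[of "real n" "real p" t] by auto
  show ?thesis using nm unfolding theta_sum[OF n] theta_sum[OF n nm(1)] theta_sum[OF p nm(2)] theta_sum[OF n order.trans[OF nm]]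
    by (simp add: sum.atLeastLessThan_concat)
qed



lemma gg_combine:
  assumes "0 < a" "t + ln a > 0" "a \<le> b" "b \<le> c"
  shows "integral {a..b} (gg t) + integral {b..c} (gg t) = integral {a..c} (gg t)"
  using assms by (intro Henstock_Kurzweil_Integration.integral_combine gg_int) auto

lemma finite_lower:
  fixes n m :: nat
  assumes n: "n \<ge> 1" "t + ln (real n) > 0" and nm: "n \<le> m"
  shows "integral {real n + 1..real m + 1} (gg t) + ph t (real n + 1) - ph t (real m + 1) \<le> theta_n t n m"
  using nm
proof (induction m rule: dec_induct)
  case base
  show ?case unfolding theta_n_def by simp
next
  case (step m)
  have m: "m \<ge> 1" "t + ln (real m) > 0" using n step good_mono[of "real n" "real m" t] by auto
  have m1: "0 < real m + 1" "t + ln (real m + 1) > 0" using m good_mono[of "real m" "real m + 1" t] by auto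
  have n1: "0 < real n + 1" "t + ln (real n + 1) > 0" using n good_mono[of "real n" "real n + 1" t] by auto
  have "theta_n t n (Suc m) = theta_n t n m + dd t m"
    using theta_sum[OF n] step.hyps by simp
  moreover have "gg t (real m + 1) + f2 t (real m + 1) / 24 \<le> dd t m" by (rule dd_lower[OF m])
  moreover have "integral {real m + 1..real m + 1 + 1} (gg t) \<le> gg t (real m + 1)" by (rule gg_int_upper[OF m1])
  moreover have "ph t (real m + 1) - ph t (real m + 1 + 1) \<le> f2 t (real m + 1) / 24" by (rule ph_step_lower[OF m1])
  moreover have "integral {real n + 1..real m + 1} (gg t) + integral {real m + 1..real m + 1 + 1} (gg t)
       = integral {real n + 1..real m + 1 + 1} (gg t)"
    using step.hyps by (intro gg_combine n1) auto
  ultimately show ?case using step.IH by (simp add: algebra_simps)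
qed

lemma finite_upper:
  fixes n m :: nat
  assumes n: "n \<ge> 1" "t + ln (real n) > 0" and nm: "Suc n \<le> m"
  shows "theta_n t n m \<le> integral {real n..real m} (gg t) + f2 t (real n) / 24 + ph t (real n + 1/2) - ph t (real m - 1/2)"
  using nm
proof (induction m rule: dec_induct)
  case base
  have "theta_n t n (Suc n) = dd t n" using theta_sum[OF n, of "Suc n"] by simp
  also have "\<dots> \<le> integral {real n..real n+1} (gg t) + (f2 t (real n) + f2 t (real n + 1/2)) / 48"
    by (rule dd_upper[OF n])
  also have "f2 t (real n + 1/2) \<le> f2 t (real n)" using mono_facts(1)[of "real n" "real n + 1/2" t] n by simp
  hence "(f2 t (real n) + f2 t (real n + 1/2)) / 48 \<le> f2 t (real n) / 24" by simp
  finally show ?case by (simp add: algebra_simps)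
next
  case (step m)
  have m: "m \<ge> 1" "t + ln (real m) > 0" using n step good_mono[of "real n" "real m" t] by auto
  have mh: "0 < real m - 1/2" "t + ln (real m - 1/2) > 0"
    using step.hyps n good_mono[of "real n" "real m - 1/2" t] by auto
  have "theta_n t n (Suc m) = theta_n t n m + dd t m"
    using theta_sum[OF n] step.hyps by simp
  moreover have "dd t m \<le> integral {real m..real m+1} (gg t) + (f2 t (real m) + f2 t (real m + 1/2)) / 48"
    by (rule dd_upper[OF m])
  moreover have "(f2 t (real m) + f2 t (real m + 1/2)) / 48 \<le> ph t (real m - 1/2) - ph t (real m + 1/2)"
    by (rule ph_half_upper[OF mh])
  moreover have "integral {real n..real m} (gg t) + integral {real m..real m + 1} (gg t)
       = integral {real n..real m + 1} (gg t)"
    using step.hyps n by (intro gg_combine) auto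
  moreover have "real (Suc m) - 1/2 = real m + 1/2" by simp
  ultimately show ?case using step.IH by (simp add: algebra_simps)
qed

lemma theta_n_le:
  fixes n m :: nat
  assumes n: "n \<ge> 1" "t + ln (real n) > 0"
  shows "theta_n t n m \<le> ph t (real n) + f2 t (real n) / 24 + ph t (real n + 1/2)"
proof -
  have n0: "0 < real n" using n by simp
  have nh: "0 < real n + 1/2" "t + ln (real n + 1/2) > 0" using n good_mono[of "real n" "real n + 1/2" t] by auto
  have pos: "0 < ph t (real n)" "0 < f2 t (real n)" "0 < ph t (real n + 1/2)"
    using pos_facts[OF n0 n(2)] pos_facts[OF nh] by auto
  show ?thesis
  proof (cases "Suc n \<le> m")
    case True
    have mh: "0 < real m - 1/2" "t + ln (real m - 1/2) > 0"
      using True n good_mono[of "real n" "real m - 1/2" t] by auto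
    have "integral {real n..real m} (gg t) \<le> ph t (real n) - ph t (real m)"
      using True by (intro gg_int_ph(1) n0 n(2)) auto
    moreover have "0 < ph t (real m)" "0 < ph t (real m - 1/2)"
      using pos_facts(4)[OF mh] pos_facts(4)[of "real m" t] good_mono[of "real n" "real m" t] True n by auto
    ultimately show ?thesis using finite_upper[OF n True] by simp
  next
    case False
    hence "theta_n t n m = 0" unfolding theta_n_def by (cases "m = n") auto
    thus ?thesis using pos by simp
  qed
qed



lemma theta_conv:
  fixes n :: nat
  assumes n: "n \<ge> 1" "t + ln (real n) > 0"
  shows "(\<lambda>m. theta_n t n m) \<longlonglongrightarrow> theta t n"
    "\<And>m. theta_n t n m \<le> theta t n"
proof -
  define X where "X = (\<lambda>m. theta_n t n (m + n))"
  have inc: "incseq X"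
  proof (rule incseq_SucI)
    fix m
    have "X (Suc m) = X m + dd t (m + n)" unfolding X_def using theta_sum[OF n] by simp
    moreover have "dd t (m + n) > 0"
      using dd_pos[of "m+n" t] n good_mono[of "real n" "real (m+n)" t] by auto
    ultimately show "X m \<le> X (Suc m)" by simp
  qed
  obtain L where L: "X \<longlonglongrightarrow> L" "\<forall>i. X i \<le> L"
    using incseq_convergent[OF inc, of "ph t (real n) + f2 t (real n) / 24 + ph t (real n + 1/2)"]
      theta_n_le[OF n] unfolding X_def by blast
  have lim: "(\<lambda>m. theta_n t n m) \<longlonglongrightarrow> L" using L(1) unfolding X_def by (rule LIMSEQ_offset)
  hence th: "theta t n = L" unfolding theta_def by (rule limI)
  show "(\<lambda>m. theta_n t n m) \<longlonglongrightarrow> theta t n" using lim th by simp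
  show "theta_n t n m \<le> theta t n" for m
  proof (cases "n \<le> m")
    case True
    then obtain i where "m = i + n" by (metis le_add_diff_inverse2)
    thus ?thesis using L(2) th unfolding X_def by auto
  next
    case False
    hence "theta_n t n m = 0" unfolding theta_n_def by auto
    moreover have "X 0 = 0" unfolding X_def theta_n_def by simp
    ultimately show ?thesis using L(2) th by (metis)
  qed
qed

lemma theta_lower:
  fixes n :: nat
  assumes n: "n \<ge> 1" "t + ln (real n) > 0"
  shows "integral {real n + 1..} (gg t) + ph t (real n + 1) \<le> theta t n"
proof -
  have n1: "0 < real n + 1" "t + ln (real n + 1) > 0" using n good_mono[of "real n" "real n + 1" t] by auto
  have A: "(\<lambda>m. integral {real n + 1..real (Suc m)} (gg t)) \<longlonglongrightarrow> integral {real n + 1..} (gg t)"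
    using LIMSEQ_Suc[OF gg_improper(2)[OF n1]] .
  hence A': "(\<lambda>m. integral {real n + 1..real m + 1} (gg t)) \<longlonglongrightarrow> integral {real n + 1..} (gg t)"
    by (simp add: add.commute)
  have B: "(\<lambda>m. ph t (real m + 1)) \<longlonglongrightarrow> 0" unfolding ph_def by real_asymp
  have C: "(\<lambda>m. integral {real n + 1..real m + 1} (gg t) + ph t (real n + 1) - ph t (real m + 1))
      \<longlonglongrightarrow> integral {real n + 1..} (gg t) + ph t (real n + 1) - 0"
    using A' B by (intro tendsto_intros)
  show ?thesis
    using LIMSEQ_le[OF C theta_conv(1)[OF n]] finite_lower[OF n] by auto
qed

lemma theta_upper:
  fixes n :: nat
  assumes n: "n \<ge> 1" "t + ln (real n) > 0"
  shows "theta t n \<le> integral {real n..} (gg t) + ph t (real n + 1/2) + f2 t (real n) / 24"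
proof (rule LIMSEQ_le_const2[OF theta_conv(1)[OF n]], intro exI allI impI)
  fix m assume m: "Suc n \<le> m"
  have n0: "0 < real n" using n by simp
  have mh: "0 < real m - 1/2" "t + ln (real m - 1/2) > 0"
    using m n good_mono[of "real n" "real m - 1/2" t] by auto
  have "integral {real n..real m} (gg t) \<le> integral {real n..} (gg t)"
    using m by (intro gg_improper(3)[OF n0 n(2)]) auto
  moreover have "0 < ph t (real m - 1/2)" using pos_facts(4)[OF mh] .
  ultimately show "theta_n t n m \<le> integral {real n..} (gg t) + ph t (real n + 1/2) + f2 t (real n) / 24"
    using finite_upper[OF n m] by simp
qed



lemma gg_eta: "(\<lambda>x. 1 / (24 * x^2 * (t + ln x)^2)) = gg t" by (simp add: gg_def fun_eq_iff)

lemma f2_24: "f2 t x / 24 = 1 / (24 * x^2 * (t + ln x)^2) + 1 / (12 * x^2 * (t + ln x)^3)"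
  unfolding f2_def by (simp add: field_simps)

lemma good_nat: "n \<ge> N \<Longrightarrow> N \<ge> 1 \<Longrightarrow> t + ln (real N) > 0 \<Longrightarrow> n \<ge> 1 \<and> t + ln (real n) > 0"
  using good_mono[of "real N" "real n" t] by auto

lemma theta_n_pos:
  fixes n m :: nat
  assumes n: "n \<ge> 1" "t + ln (real n) > 0" and nm: "n < m"
  shows "theta_n t n m > 0"
proof -
  have "theta_n t n m = (\<Sum>k=n..<m. dd t k)" using theta_sum[OF n] nm by simp
  also have "\<dots> > 0"
  proof (rule sum_pos)
    fix k assume "k \<in> {n..<m}"
    thus "0 < dd t k" using dd_pos[of k t] good_nat[of n k t] n by auto
  qed (use nm in auto)
  finally show ?thesis .
qed

lemma theta_pos:
  fixes n :: nat
  assumes n: "n \<ge> 1" "t + ln (real n) > 0"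
  shows "theta t n > 0"
proof -
  have n1: "0 < real n + 1" "t + ln (real n + 1) > 0" using n good_mono[of "real n" "real n + 1" t] by auto
  show ?thesis using theta_lower[OF n] gg_improper(5)[OF n1] pos_facts(4)[OF n1] by simp
qed

lemma int_lower:
  fixes a :: real
  assumes a: "0 < a" "t + ln a > 0"
  shows "ph t a \<le> (1 + 2/(t + ln a)) * integral {a..} (gg t)"
proof -
  have A: "(\<lambda>m. ph t a - ph t (real m)) \<longlonglongrightarrow> ph t a - 0"
    by (intro tendsto_intros) (unfold ph_def, real_asymp)
  have B: "(\<lambda>m. (1 + 2/(t + ln a)) * integral {a..real m} (gg t)) \<longlonglongrightarrow> (1 + 2/(t + ln a)) * integral {a..} (gg t)"
    by (intro tendsto_intros gg_improper(2)[OF a])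
  have "\<exists>N. \<forall>m\<ge>N. ph t a - ph t (real m) \<le> (1 + 2/(t + ln a)) * integral {a..real m} (gg t)"
  proof (intro exI allI impI)
    fix m :: nat assume "nat \<lceil>a\<rceil> \<le> m"
    hence "a \<le> real m" by linarith
    thus "ph t a - ph t (real m) \<le> (1 + 2/(t + ln a)) * integral {a..real m} (gg t)"
      by (rule gg_int_ph(2)[OF a])
  qed
  from LIMSEQ_le[OF A B this] show ?thesis by simp
qed

lemma theta_two_sided:
  fixes n :: nat
  assumes n: "n \<ge> 1" "t + ln (real n) > 0"
  shows "ph t (real n + 1) / (1 + 2/(t + ln (real n + 1))) + ph t (real n + 1) \<le> theta t n"
    "theta t n \<le> ph t (real n) + ph t (real n + 1/2) + f2 t (real n) / 24"
proof -
  have n0: "0 < real n" using n by simp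
  have n1: "0 < real n + 1" "t + ln (real n + 1) > 0" using n good_mono[of "real n" "real n + 1" t] by auto
  have c: "0 < 1 + 2/(t + ln (real n + 1))" using n1 by (simp add: add_pos_pos)
  have "ph t (real n + 1) / (1 + 2/(t + ln (real n + 1))) \<le> integral {real n + 1..} (gg t)"
    using int_lower[OF n1] c by (simp add: divide_le_eq mult.commute)
  thus "ph t (real n + 1) / (1 + 2/(t + ln (real n + 1))) + ph t (real n + 1) \<le> theta t n"
    using theta_lower[OF n] by simp
  show "theta t n \<le> ph t (real n) + ph t (real n + 1/2) + f2 t (real n) / 24"
    using theta_upper[OF n] gg_improper(4)[OF n0 n(2)] by simp
qed

lemma theta_tail:
  fixes N n :: nat
  assumes N: "N \<ge> 1" "t + ln (real N) > 0" and nN: "N \<le> n"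
  shows "theta t N - theta_n t N n = theta t n"
proof -
  have n: "n \<ge> 1" "t + ln (real n) > 0" using good_nat[OF nN N(1,2)] by auto
  have A: "(\<lambda>m. theta_n t N m - theta_n t N n) \<longlonglongrightarrow> theta t N - theta_n t N n"
    by (intro tendsto_intros theta_conv(1)[OF N])
  have ev: "eventually (\<lambda>m. theta_n t N m - theta_n t N n = theta_n t n m) sequentially"
    using eventually_ge_at_top[of n]
  proof (rule eventually_mono)
    fix m assume "n \<le> m"
    thus "theta_n t N m - theta_n t N n = theta_n t n m" using theta_split[OF N nN, of m] by simp
  qed
  have "(\<lambda>m. theta_n t N m - theta_n t N n) \<longlonglongrightarrow> theta t n"
    by (subst tendsto_cong[OF ev]) (rule theta_conv(1)[OF n])
  from LIMSEQ_unique[OF A this] show ?thesis .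
qed



lemma asymp_part:
  fixes N :: nat
  assumes N: "N \<ge> 1" "t + ln (real N) > 0"
  shows "(\<lambda>n. theta t N - theta_n t N n) \<sim>[sequentially] (\<lambda>n. 1 / (12 * real n * (ln (real n))^2))"
proof (rule asymp_equivI')
  define g where "g = (\<lambda>n::nat. 1 / (12 * real n * (ln (real n))^2))"
  define Lo where "Lo = (\<lambda>n::nat. ph t (real n + 1) / (1 + 2/(t + ln (real n + 1))) + ph t (real n + 1))"
  define Up where "Up = (\<lambda>n::nat. ph t (real n) + ph t (real n + 1/2) + f2 t (real n) / 24)"
  have L1: "(\<lambda>n. Lo n / g n) \<longlonglongrightarrow> 1" unfolding Lo_def g_def ph_def by real_asymp
  have L2: "(\<lambda>n. Up n / g n) \<longlonglongrightarrow> 1" unfolding Up_def g_def ph_def f2_def by real_asymp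
  have ev: "eventually (\<lambda>n. Lo n / g n \<le> (theta t N - theta_n t N n) / g n \<and>
      (theta t N - theta_n t N n) / g n \<le> Up n / g n) sequentially"
    using eventually_ge_at_top[of "max N 2"]
  proof (rule eventually_mono)
    fix n assume n: "max N 2 \<le> n"
    have nN: "N \<le> n" using n by simp
    have gn: "n \<ge> 1 \<and> t + ln (real n) > 0" using good_nat[OF nN N] .
    have "ln (real n) > 0" using n by simp
    hence g0: "g n > 0" unfolding g_def using n by simp
    have eq: "theta t N - theta_n t N n = theta t n" by (rule theta_tail[OF N nN])
    show "Lo n / g n \<le> (theta t N - theta_n t N n) / g n \<and> (theta t N - theta_n t N n) / g n \<le> Up n / g n"
      unfolding eq Lo_def Up_def using theta_two_sided[of n t] gn g0
      by (auto intro: divide_right_mono)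
  qed
  show "((\<lambda>n. (theta t N - theta_n t N n) / (1 / (12 * real n * (ln (real n))^2))) \<longlonglongrightarrow> 1)"
    using tendsto_sandwich[OF eventually_mono[OF ev] eventually_mono[OF ev] L1 L2]
    unfolding g_def by auto
qed

lemma uniform_part:
  "\<exists>C T. \<forall>M::nat. \<forall>s::real. M \<ge> 1 \<longrightarrow> s \<ge> T \<longrightarrow> \<bar>theta s M\<bar> \<le> C / (real M * s^2)"
proof (intro exI allI impI)
  fix M :: nat and s :: real
  assume M: "M \<ge> 1" and s: "s \<ge> 1"
  define x where "x = real M"
  have x: "x \<ge> 1" using M by (simp add: x_def)
  define L where "L = s + ln x"
  have lnx: "ln x \<ge> 0" using x by simp
  have L: "L \<ge> s" using lnx by (simp add: L_def)
  have g2: "s + ln (real M) > 0" using s lnx unfolding x_def by linarith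
  have g: "M \<ge> 1" "s + ln (real M) > 0" using M g2 by auto
  have pos: "theta s M > 0" by (rule theta_pos[OF g])
  have up: "theta s M \<le> ph s x + ph s (x + 1/2) + f2 s x / 24"
    using theta_two_sided(2)[OF g] by (simp add: x_def)
  have Ls: "s^2 \<le> L^2" using L s by (intro power_mono) auto
  have Ls3: "s^2 \<le> L^3"
  proof -
    have "L^2 \<le> L^3" by (rule power_increasing) (use L s in auto)
    thus ?thesis using Ls by simp
  qed
  define q where "q = 1/(x * s^2)"
  have xs: "x * s^2 > 0" using x s by simp
  have q0: "q > 0" using xs by (simp add: q_def)
  have x2: "x \<le> x^2" using x by (simp add: power2_eq_square)
  have a: "x * s^2 \<le> x^2 * L^2" using Ls x2 x s by (intro mult_mono) auto
  have b: "x * s^2 \<le> x^2 * L^3" using Ls3 x2 x s by (intro mult_mono) auto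
  have c: "x * s^2 \<le> x * L^2" using Ls x by (intro mult_mono) auto
  have p1: "ph s x \<le> q/24"
  proof -
    have "ph s x = 1/(24 * (x * L^2))" unfolding ph_def L_def by (simp add: mult.assoc)
    also have "\<dots> \<le> 1/(24 * (x * s^2))" using c xs L s x by (intro divide_left_mono) auto
    finally show ?thesis by (simp add: q_def)
  qed
  have gx: "0 < x" "s + ln x > 0" using x g2 unfolding x_def by auto
  have p2: "ph s (x + 1/2) \<le> ph s x" by (rule mono_facts(4)[OF gx(1) _ gx(2)]) simp
  have p3: "f2 s x / 24 \<le> q/8"
  proof -
    have A: "1/(x^2 * L^2) \<le> q" unfolding q_def using a xs by (intro divide_left_mono) auto
    have "2/(x^2 * L^3) \<le> 2/(x * s^2)" using b xs by (intro divide_left_mono) auto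
    moreover have "2/(x * s^2) = 2 * q" unfolding q_def by simp
    ultimately have B: "2/(x^2 * L^3) \<le> 2 * q" by linarith
    have C: "f2 s x = 1/(x^2 * L^2) + 2/(x^2 * L^3)" unfolding f2_def L_def ..
    from A B C show ?thesis by linarith
  qed
  have "theta s M \<le> q" using up p1 p2 p3 q0 by linarith
  thus "\<bar>theta s M\<bar> \<le> 1 / (real M * s^2)" using pos by (simp add: x_def q_def)
qed

theorem theorem3p3:
  fixes N :: nat and t :: real
  assumes hN: "N \<ge> 1" and ht: "t > - ln (real N)"
  shows
    \<comment> \<open>(1)\<close>
    "(\<forall>n. n > N \<longrightarrow> theta_n t N n > 0)
     \<and> (\<forall>m n. N < m \<longrightarrow> m < n \<longrightarrow> theta_n t N m < theta_n t N n)
     \<and> (\<exists>B. \<forall>n. n > N \<longrightarrow> theta_n t N n \<le> B)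
     \<and> (\<lambda>n. theta_n t N n) \<longlonglongrightarrow> theta t N
     \<and> theta t N > 0
    \<comment> \<open>(2)\<close>
     \<and> (\<forall>n::nat. n \<ge> N \<longrightarrow>
          theta t N - theta_n t N n = theta t n
          \<and> (\<lambda>x. 1 / (24 * x^2 * (t + ln x)^2)) integrable_on {real n..}
          \<and> (\<lambda>x. 1 / (24 * x^2 * (t + ln x)^2)) integrable_on {real n + 1..}
          \<and> integral {real n + 1..} (\<lambda>x. 1 / (24 * x^2 * (t + ln x)^2))
              + 1 / (24 * (real n + 1) * (t + ln (real n + 1))^2) \<le> theta t n
          \<and> theta t n \<le> integral {real n..} (\<lambda>x. 1 / (24 * x^2 * (t + ln x)^2))
              + 1 / (24 * (real n + 1/2) * (t + ln (real n + 1/2))^2)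
              + 1 / (24 * (real n)^2 * (t + ln (real n))^2)
              + 1 / (12 * (real n)^2 * (t + ln (real n))^3))
    \<comment> \<open>(3)\<close>
     \<and> (\<lambda>n. theta t N - theta_n t N n) \<sim>[sequentially]
          (\<lambda>n. 1 / (12 * real n * (ln (real n))^2))
     \<and> (\<exists>C T. \<forall>M::nat. \<forall>s::real. M \<ge> 1 \<longrightarrow> s \<ge> T \<longrightarrow>
          \<bar>theta s M\<bar> \<le> C / (real M * s^2))"
  proof -
  have N: "N \<ge> 1" "t + ln (real N) > 0" using hN ht by auto
  have P1: "\<forall>n. n > N \<longrightarrow> theta_n t N n > 0" using theta_n_pos[OF N] by auto
  have P2: "\<forall>m n. N < m \<longrightarrow> m < n \<longrightarrow> theta_n t N m < theta_n t N n"
  proof (intro allI impI)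
    fix m n :: nat assume mn: "N < m" "m < n"
    have gm: "m \<ge> 1 \<and> t + ln (real m) > 0" using good_nat[of N m t] mn N by auto
    have "theta_n t N n = theta_n t N m + theta_n t m n" using theta_split[OF N, of m n] mn by simp
    moreover have "theta_n t m n > 0" using theta_n_pos[of m t n] gm mn by auto
    ultimately show "theta_n t N m < theta_n t N n" by simp
  qed
  have P3: "\<exists>B. \<forall>n. n > N \<longrightarrow> theta_n t N n \<le> B" using theta_n_le[OF N] by blast
  have P4: "(\<lambda>n. theta_n t N n) \<longlonglongrightarrow> theta t N" by (rule theta_conv(1)[OF N])
  have P5: "theta t N > 0" by (rule theta_pos[OF N])
  have P6: "\<forall>n::nat. n \<ge> N \<longrightarrow>
          theta t N - theta_n t N n = theta t n
          \<and> (\<lambda>x. 1 / (24 * x^2 * (t + ln x)^2)) integrable_on {real n..}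
          \<and> (\<lambda>x. 1 / (24 * x^2 * (t + ln x)^2)) integrable_on {real n + 1..}
          \<and> integral {real n + 1..} (\<lambda>x. 1 / (24 * x^2 * (t + ln x)^2))
              + 1 / (24 * (real n + 1) * (t + ln (real n + 1))^2) \<le> theta t n
          \<and> theta t n \<le> integral {real n..} (\<lambda>x. 1 / (24 * x^2 * (t + ln x)^2))
              + 1 / (24 * (real n + 1/2) * (t + ln (real n + 1/2))^2)
              + 1 / (24 * (real n)^2 * (t + ln (real n))^2)
              + 1 / (12 * (real n)^2 * (t + ln (real n))^3)"
  proof (intro allI impI conjI)
    fix n :: nat assume nN: "n \<ge> N"
    have gn: "n \<ge> 1" "t + ln (real n) > 0" using good_nat[OF nN N] by auto
    have n0: "0 < real n" using gn by simp
    have n1: "0 < real n + 1" "t + ln (real n + 1) > 0" using gn good_mono[of "real n" "real n + 1" t] by auto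
    show "theta t N - theta_n t N n = theta t n" by (rule theta_tail[OF N nN])
    show "(\<lambda>x. 1 / (24 * x^2 * (t + ln x)^2)) integrable_on {real n..}"
      unfolding gg_eta by (rule gg_improper(1)[OF n0 gn(2)])
    show "(\<lambda>x. 1 / (24 * x^2 * (t + ln x)^2)) integrable_on {real n + 1..}"
      unfolding gg_eta by (rule gg_improper(1)[OF n1])
    show "integral {real n + 1..} (\<lambda>x. 1 / (24 * x^2 * (t + ln x)^2))
              + 1 / (24 * (real n + 1) * (t + ln (real n + 1))^2) \<le> theta t n"
      using theta_lower[OF gn] unfolding gg_eta ph_def .
    have U: "theta t n \<le> integral {real n..} (gg t) + ph t (real n + 1/2) + f2 t (real n) / 24"
      by (rule theta_upper[OF gn])
    show "theta t n \<le> integral {real n..} (\<lambda>x. 1 / (24 * x^2 * (t + ln x)^2))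
              + 1 / (24 * (real n + 1/2) * (t + ln (real n + 1/2))^2)
              + 1 / (24 * (real n)^2 * (t + ln (real n))^2)
              + 1 / (12 * (real n)^2 * (t + ln (real n))^3)"
      using U unfolding gg_eta ph_def f2_24 by (simp add: add.assoc)
  qed
  have P7: "(\<lambda>n. theta t N - theta_n t N n) \<sim>[sequentially]
          (\<lambda>n. 1 / (12 * real n * (ln (real n))^2))" by (rule asymp_part[OF N])
  have P8: "\<exists>C T. \<forall>M::nat. \<forall>s::real. M \<ge> 1 \<longrightarrow> s \<ge> T \<longrightarrow>
          \<bar>theta s M\<bar> \<le> C / (real M * s^2)" by (rule uniform_part)
  show ?thesis using P1 P2 P3 P4 P5 P6 P7 P8 by (intro conjI)
qed

end
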